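(* Let $(X,d)$ be a compact metric space, $\mathbb{F}=\{f_n:n\in\mathbb{N}\}$ a sequence of continuous surjective self-maps of $X$, and $k\in\mathbb{N}$. If $(X,\mathbb{F})$ is sensitive then $(X,\mathbb{F}_k)$ is sensitive. If the family $\mathbb{F}$ is feeble open, then $(X,\mathbb{F}_k)$ sensitive implies $(X,\mathbb{F})$ sensitive.
   Context: Write $\omega_n=f_n\circ\cdots\circ f_1$ and, for $n>k$, $\omega^k_n=f_n\circ\cdots\circ f_{k+1}$; $\mathbb{F}_k=\{f_n:n\ge k+1\}$ is the truncated family. $(X,\mathbb{F})$ is sensitive if there is $\delta>0$ such that for every $x\in X$ and every neighborhood $U$ of $x$ there is $n\in\mathbb{N}$ with $\mathrm{diam}(\omega_n(U))>\delta$; $(X,\mathbb{F}_k)$ is sensitive if the same holds with $\omega^k_n$ ($n>k$). $\mathbb{F}$ is feeble open if for every non-empty open $U$ and every $f\in\mathbb{F}$, $f(U)$ has non-empty interior. *)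

theory Defs
  imports "HOL-Analysis.Analysis"
begin

text \<open>The family is indexed by positive naturals: f 1, f 2, ... (the value f 0 is ignored).
  omega_from f k n = f n o ... o f (k+1) for n > k (identity for n \<le> k);
  so omega_from f 0 n is the paper's omega_n.\<close>

fun omega_from :: "(nat \<Rightarrow> 'a \<Rightarrow> 'a) \<Rightarrow> nat \<Rightarrow> nat \<Rightarrow> 'a \<Rightarrow> 'a" where
  "omega_from f k 0 = id"
| "omega_from f k (Suc n) = (if Suc n \<le> k then id else f (Suc n) \<circ> omega_from f k n)"

definition nbhd_in :: "'a::metric_space set \<Rightarrow> 'a \<Rightarrow> 'a set \<Rightarrow> bool" where
  "nbhd_in X x U \<longleftrightarrow> U \<subseteq> X \<and> (\<exists>V. openin (top_of_set X) V \<and> x \<in> V \<and> V \<subseteq> U)"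

text \<open>Sensitivity of the truncated family F_k = {f n : n \<ge> k+1}; F_0 is F itself.\<close>
definition sensitive_from :: "'a::metric_space set \<Rightarrow> (nat \<Rightarrow> 'a \<Rightarrow> 'a) \<Rightarrow> nat \<Rightarrow> bool" where
  "sensitive_from X f k \<longleftrightarrow>
     (\<exists>\<delta>>0. \<forall>x\<in>X. \<forall>U. nbhd_in X x U \<longrightarrow>
        (\<exists>n>k. diameter (omega_from f k n ` U) > \<delta>))"

definition feeble_open :: "'a::metric_space set \<Rightarrow> (nat \<Rightarrow> 'a \<Rightarrow> 'a) \<Rightarrow> bool" where
  "feeble_open X f \<longleftrightarrow>
     (\<forall>U n. openin (top_of_set X) U \<and> U \<noteq> {} \<and> n \<ge> 1 \<longrightarrow>
        (\<exists>W. openin (top_of_set X) W \<and> W \<noteq> {} \<and> W \<subseteq> f n ` U))"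

end

theory Submission
  imports Defs
begin

lemma omega_split:
  "k \<le> n \<Longrightarrow> omega_from f 0 n = omega_from f k n \<circ> omega_from f 0 k"
proof (induction n)
  case 0
  then show ?case by simp
next
  case (Suc n)
  show ?case
  proof (cases "k = Suc n")
    case True
    then show ?thesis by simp
  next
    case False
    then have "k \<le> n" using Suc.prems by simp
    then show ?thesis using Suc.IH False Suc.prems by (auto simp: fun_eq_iff)
  qed
qed

lemma omega_maps:
  assumes "\<And>n. n \<ge> 1 \<Longrightarrow> f n ` X = X"
  shows "omega_from f k n ` X \<subseteq> X"
proof (induction n)
  case 0
  then show ?case by simp
next
  case (Suc n)
  have e: "omega_from f k (Suc n) ` X = (if Suc n \<le> k then X else f (Suc n) ` (omega_from f k n ` X))"
    by (simp add: image_image)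
  have "f (Suc n) ` omega_from f k n ` X \<subseteq> f (Suc n) ` X"
    using Suc by (rule image_mono)
  also have "\<dots> = X" using assms[of "Suc n"] by simp
  finally show ?case unfolding e by simp
qed

lemma omega_cont:
  assumes "\<And>n. n \<ge> 1 \<Longrightarrow> continuous_on X (f n)"
    and "\<And>n. n \<ge> 1 \<Longrightarrow> f n ` X = X"
  shows "continuous_on X (omega_from f k n)"
proof (induction n)
  case 0
  then show ?case by (simp add: continuous_on_id)
next
  case (Suc n)
  have "continuous_on X (f (Suc n) \<circ> omega_from f k n)"
  proof (rule continuous_on_compose[OF Suc])
    show "continuous_on (omega_from f k n ` X) (f (Suc n))"
      using continuous_on_subset[OF assms(1)[of "Suc n"] omega_maps[OF assms(2)]] by simp
  qed
  then show ?case by (cases "Suc n \<le> k") (simp_all add: continuous_on_id)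
qed

lemma omega_surj:
  assumes "\<And>n. n \<ge> 1 \<Longrightarrow> f n ` X = X"
  shows "omega_from f k n ` X = X"
proof (induction n)
  case 0
  then show ?case by simp
next
  case (Suc n)
  have e: "omega_from f k (Suc n) ` X = (if Suc n \<le> k then X else f (Suc n) ` (omega_from f k n ` X))"
    by (simp add: image_image)
  show ?case unfolding e using Suc assms[of "Suc n"] by simp
qed

lemma feeble_iter:
  assumes "feeble_open X f" "openin (top_of_set X) W" "W \<noteq> {}"
  shows "\<exists>Q. openin (top_of_set X) Q \<and> Q \<noteq> {} \<and> Q \<subseteq> omega_from f 0 m ` W"
proof (induction m)
  case 0
  then show ?case using assms by auto
next
  case (Suc m)
  then obtain Q where Q: "openin (top_of_set X) Q" "Q \<noteq> {}" "Q \<subseteq> omega_from f 0 m ` W" by blast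
  have c: "openin (top_of_set X) Q \<and> Q \<noteq> {} \<and> Suc m \<ge> 1" using Q(1,2) by simp
  obtain Q' where Q': "openin (top_of_set X) Q'" "Q' \<noteq> {}" "Q' \<subseteq> f (Suc m) ` Q"
    using assms(1)[unfolded feeble_open_def, rule_format, OF c] by blast
  have e: "omega_from f 0 (Suc m) ` W = f (Suc m) ` (omega_from f 0 m ` W)"
    by (simp add: image_image)
  have "f (Suc m) ` Q \<subseteq> omega_from f 0 (Suc m) ` W"
    unfolding e using Q(3) by (rule image_mono)
  with Q'(3) have "Q' \<subseteq> omega_from f 0 (Suc m) ` W" by (rule order_trans)
  with Q'(1,2) show ?case by (intro exI[of _ Q']) simp
qed

theorem mainTheorem6:
  fixes X :: "'a::metric_space set" and f :: "nat \<Rightarrow> 'a \<Rightarrow> 'a" and k :: nat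
  assumes "compact X"
    and "\<And>n. n \<ge> 1 \<Longrightarrow> continuous_on X (f n)"
    and "\<And>n. n \<ge> 1 \<Longrightarrow> f n ` X = X"
  shows "(sensitive_from X f 0 \<longrightarrow> sensitive_from X f k)
       \<and> (feeble_open X f \<longrightarrow> sensitive_from X f k \<longrightarrow> sensitive_from X f 0)"
proof (intro conjI impI)
  have bX: "bounded X" using assms(1) by (rule compact_imp_bounded)
  have bimg: "bounded (omega_from f j n ` U)" if "U \<subseteq> X" for j n U
    by (rule bounded_subset[OF bX order_trans[OF image_mono[OF that] omega_maps[where f=f and X=X, OF assms(3)]]])
  {
    assume "sensitive_from X f 0"
    then obtain \<delta> where d0: "\<delta> > 0" and sens0: "\<forall>x\<in>X. \<forall>U. nbhd_in X x U \<longrightarrow>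
        (\<exists>n>0. diameter (omega_from f 0 n ` U) > \<delta>)"
      unfolding sensitive_from_def by blast
    have sens: "\<exists>n>0. diameter (omega_from f 0 n ` U) > \<delta>" if "x \<in> X" "nbhd_in X x U" for x U
      using sens0 that by blast
    show "sensitive_from X f k"
      unfolding sensitive_from_def
    proof (intro exI[of _ \<delta>] conjI ballI allI impI d0)
      fix x U assume xX: "x \<in> X" and nb: "nbhd_in X x U"
      then obtain W where W: "openin (top_of_set X) W" "x \<in> W" "W \<subseteq> U" "U \<subseteq> X"
        unfolding nbhd_in_def by blast
      have "x \<in> omega_from f 0 k ` X" using omega_surj[where f=f and X=X, OF assms(3), where k=0 and n=k] xX by simp
      then obtain z where zX: "z \<in> X" and zx: "omega_from f 0 k z = x" by (auto elim: imageE)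
      have ev: "eventually (\<lambda>y. \<forall>j\<in>{..k}. dist (omega_from f 0 j y) (omega_from f 0 j z) < \<delta>/4)
                 (at z within X)"
      proof (rule eventually_ball_finite[OF finite_atMost], intro ballI)
        fix j
        have c: "continuous_on X (omega_from f 0 j)" by (rule omega_cont[where f=f and X=X, OF assms(2,3)])
        have "((omega_from f 0 j) \<longlongrightarrow> omega_from f 0 j z) (at z within X)"
          using bspec[OF c[unfolded continuous_on_def] zX] .
        then show "eventually (\<lambda>y. dist (omega_from f 0 j y) (omega_from f 0 j z) < \<delta>/4) (at z within X)"
          by (rule tendstoD) (use d0 in simp)
      qed
      then obtain e where e: "e > 0" and eP: "\<And>y. y \<in> X \<Longrightarrow> y \<noteq> z \<Longrightarrow> dist y z < e \<Longrightarrow>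
          \<forall>j\<in>{..k}. dist (omega_from f 0 j y) (omega_from f 0 j z) < \<delta>/4"
        unfolding eventually_at by blast
      define V where "V = {y\<in>X. omega_from f 0 k y \<in> W} \<inter> ball z e"
      have op1: "openin (top_of_set X) {y\<in>X. omega_from f 0 k y \<in> W}"
      proof -
        have c: "continuous_on X (omega_from f 0 k)" by (rule omega_cont[where f=f and X=X, OF assms(2,3)])
        have m: "omega_from f 0 k \<in> X \<rightarrow> X"
          using omega_maps[where f=f and X=X and k=0 and n=k, OF assms(3)] by (simp add: image_subset_iff_funcset)
        have "openin (top_of_set X) (X \<inter> omega_from f 0 k -` W)"
          using continuous_on_open_gen[OF m] c W(1) by blast
        moreover have "X \<inter> omega_from f 0 k -` W = {y\<in>X. omega_from f 0 k y \<in> W}" by auto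
        ultimately show ?thesis by simp
      qed
      have opV: "openin (top_of_set X) V"
        unfolding V_def using op1 by (simp add: openin_Int_open)
      have zV: "z \<in> V" using zX zx W e by (simp add: V_def)
      have VX: "V \<subseteq> X" by (auto simp: V_def)
      have nbV: "nbhd_in X z V" unfolding nbhd_in_def using VX opV zV by blast
      have close: "dist (omega_from f 0 j y) (omega_from f 0 j z) < \<delta>/4"
        if "y \<in> V" "j \<le> k" for y j
        using eP[of y] that d0 by (cases "y = z") (auto simp: V_def dist_commute)
      obtain n where n: "n > 0" "diameter (omega_from f 0 n ` V) > \<delta>"
        using sens[OF zX nbV] by blast
      have nk: "n > k"
      proof (rule ccontr)
        assume "\<not> n > k"
        then have nle: "n \<le> k" by simp
        obtain a b where ab: "a \<in> omega_from f 0 n ` V" "b \<in> omega_from f 0 n ` V" "dist a b > \<delta>"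
          using diameter_lower_bounded[OF bimg[OF VX] d0 n(2)] by blast
        then obtain ya yb where "ya \<in> V" "yb \<in> V" "a = omega_from f 0 n ya" "b = omega_from f 0 n yb"
          by blast
        then have "dist a (omega_from f 0 n z) < \<delta>/4" "dist b (omega_from f 0 n z) < \<delta>/4"
          using close nle by auto
        then have "dist a b < \<delta>/2"
          using dist_triangle2[of a b "omega_from f 0 n z"] by linarith
        then show False using ab d0 by simp
      qed
      have "omega_from f 0 n ` V \<subseteq> omega_from f k n ` U"
      proof
        fix b assume "b \<in> omega_from f 0 n ` V"
        then obtain y where y: "y \<in> V" "b = omega_from f 0 n y" by blast
        have "b = omega_from f k n (omega_from f 0 k y)"
          using y(2) omega_split[where k=k and n=n and f=f] nk by simp
        moreover have "omega_from f 0 k y \<in> U" using y(1) W(3) by (auto simp: V_def)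
        ultimately show "b \<in> omega_from f k n ` U" by blast
      qed
      then have "diameter (omega_from f 0 n ` V) \<le> diameter (omega_from f k n ` U)"
        by (rule diameter_subset[OF _ bimg[OF W(4)]])
      then show "\<exists>n>k. diameter (omega_from f k n ` U) > \<delta>"
        using nk n by (intro exI[of _ n]) simp
    qed
  }
  {
    assume fo: "feeble_open X f" and "sensitive_from X f k"
    then obtain \<delta> where d0: "\<delta> > 0" and sens0: "\<forall>x\<in>X. \<forall>U. nbhd_in X x U \<longrightarrow>
        (\<exists>n>k. diameter (omega_from f k n ` U) > \<delta>)"
      unfolding sensitive_from_def by blast
    have sens: "\<exists>n>k. diameter (omega_from f k n ` U) > \<delta>" if "x \<in> X" "nbhd_in X x U" for x U
      using sens0 that by blast
    show "sensitive_from X f 0"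
      unfolding sensitive_from_def
    proof (intro exI[of _ \<delta>] conjI ballI allI impI d0)
      fix x U assume xX: "x \<in> X" and nb: "nbhd_in X x U"
      then obtain W where W: "openin (top_of_set X) W" "x \<in> W" "W \<subseteq> U" "U \<subseteq> X"
        unfolding nbhd_in_def by blast
      have Wne: "W \<noteq> {}" using W(2) by blast
      obtain Q where Q: "openin (top_of_set X) Q" "Q \<noteq> {}" "Q \<subseteq> omega_from f 0 k ` W"
        using feeble_iter[OF fo W(1) Wne, where m=k] by blast
      obtain y where yQ: "y \<in> Q" using Q(2) by blast
      have QX: "Q \<subseteq> X" using Q(1) openin_subset by fastforce
      have nbQ: "nbhd_in X y Q" unfolding nbhd_in_def using Q(1) yQ QX by blast
      have yX: "y \<in> X" using QX yQ by blast
      obtain n where n: "n > k" "diameter (omega_from f k n ` Q) > \<delta>"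
        using sens[OF yX nbQ] by blast
      have "omega_from f k n ` Q \<subseteq> omega_from f k n ` (omega_from f 0 k ` W)"
        using Q(3) by (rule image_mono)
      also have "\<dots> = omega_from f 0 n ` W"
      proof -
        have "omega_from f 0 n = omega_from f k n \<circ> omega_from f 0 k"
          by (rule omega_split) (use n(1) in simp)
        then show ?thesis by (simp only: image_comp)
      qed
      also have "\<dots> \<subseteq> omega_from f 0 n ` U"
        using W(3) by (rule image_mono)
      finally have "omega_from f k n ` Q \<subseteq> omega_from f 0 n ` U" .
      then have "diameter (omega_from f k n ` Q) \<le> diameter (omega_from f 0 n ` U)"
        by (rule diameter_subset[OF _ bimg[OF W(4)]])
      then show "\<exists>n>0. diameter (omega_from f 0 n ` U) > \<delta>"
        using n by (intro exI[of _ n]) simp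
    qed
  }
qed

end
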